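(* Let $\mathcal{B}$ be a complete topological ring and let $\mathrm{e}\colon\mathcal{B}\to\mathcal{B}\{T\}$ be a restricted exponential homomorphism. Then the compositions $\varphi=\pi_{(1)}\circ\mathrm{e}\colon\mathcal{B}\to\mathcal{B}$ and $\psi=\pi_{(-1)}\circ\mathrm{e}\colon\mathcal{B}\to\mathcal{B}$ are continuous ring automorphisms of $\mathcal{B}$ inverse to each other, where $\pi_{(\pm1)}\colon\mathcal{B}\{T\}\to\mathcal{B}$ is the continuous $\mathcal{B}$-algebra homomorphism $\sum_ib_iT^i\mapsto\sum_ib_i(\pm1)^i$.
   Context: Conventions: topological rings are linearly topologized with a countable fundamental system of open ideals; homomorphisms are continuous; complete means the canonical map to $\varprojlim_{\mathfrak{a}}\mathcal{B}/\mathfrak{a}$ (open ideals, discrete quotients) is a topological isomorphism. $\mathcal{B}\{T\}$, $\mathcal{B}\{T,T'\}$ denote restricted power series over $\mathcal{B}$ (coefficients converging to $0$, so the sums above converge), topologized by the ideals of series with all coefficients in a given open ideal. A restricted exponential homomorphism is a continuous ring homomorphism $\mathrm{e}\colon\mathcal{B}\to\mathcal{B}\{T\}$, $\mathrm{e}(b)=\sum_i\mathrm{e}_i(b)T^i$, with $\mathrm{e}_0=\mathrm{id}$ and $\sum_{i,j}\mathrm{e}_j(\mathrm{e}_i(b))T'^jT^i=\sum_\ell\mathrm{e}_\ell(b)(T+T')^\ell$ for all $b$. *)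

theory Defs
  imports Main
begin

text \<open>A linearly topologized commutative ring with a countable fundamental system
  of open ideals, given by a decreasing sequence I 0, I 1, ... of ideals.
  The open ideals are exactly the ideals containing some I n.\<close>

definition is_ideal :: "'a::comm_ring_1 set \<Rightarrow> bool" where
  "is_ideal J \<longleftrightarrow> 0 \<in> J \<and> (\<forall>x\<in>J. \<forall>y\<in>J. x + y \<in> J) \<and> (\<forall>x\<in>J. - x \<in> J)
     \<and> (\<forall>r x. x \<in> J \<longrightarrow> r * x \<in> J)"

definition lin_top :: "(nat \<Rightarrow> 'a::comm_ring_1 set) \<Rightarrow> bool" where
  "lin_top I \<longleftrightarrow> (\<forall>n. is_ideal (I n)) \<and> (\<forall>n. I (Suc n) \<subseteq> I n)"

text \<open>Elements of the inverse limit of the discrete quotients B / I n, represented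
  by compatible families of representatives.\<close>
definition compatible_family :: "(nat \<Rightarrow> 'a::comm_ring_1 set) \<Rightarrow> (nat \<Rightarrow> 'a) \<Rightarrow> bool" where
  "compatible_family I x \<longleftrightarrow> (\<forall>m n. n \<le> m \<longrightarrow> x m - x n \<in> I n)"

text \<open>Completeness: the canonical map B \<rightarrow> lim B / I n is bijective
  (injective: Hausdorff; surjective: every compatible family comes from an element).
  For linear topologies this bijection is automatically a homeomorphism.\<close>
definition complete_lin :: "(nat \<Rightarrow> 'a::comm_ring_1 set) \<Rightarrow> bool" where
  "complete_lin I \<longleftrightarrow> lin_top I \<and> (\<Inter>n. I n) = {0}
     \<and> (\<forall>x. compatible_family I x \<longrightarrow> (\<exists>b. \<forall>n. b - x n \<in> I n))"

definition cont_map :: "(nat \<Rightarrow> 'a::comm_ring_1 set) \<Rightarrow> ('a \<Rightarrow> 'a) \<Rightarrow> bool" where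
  "cont_map I f \<longleftrightarrow> (\<forall>n. \<exists>m. \<forall>b\<in>I m. f b \<in> I n)"

definition ring_hom_on :: "('a::comm_ring_1 \<Rightarrow> 'a) \<Rightarrow> bool" where
  "ring_hom_on f \<longleftrightarrow> f 1 = 1 \<and> (\<forall>a b. f (a + b) = f a + f b) \<and> (\<forall>a b. f (a * b) = f a * f b)"

definition lin_tendsto :: "(nat \<Rightarrow> 'a::comm_ring_1 set) \<Rightarrow> (nat \<Rightarrow> 'a) \<Rightarrow> 'a \<Rightarrow> bool" where
  "lin_tendsto I s L \<longleftrightarrow> (\<forall>n. \<exists>N. \<forall>k\<ge>N. s k - L \<in> I n)"

definition lin_suminf :: "(nat \<Rightarrow> 'a::comm_ring_1 set) \<Rightarrow> (nat \<Rightarrow> 'a) \<Rightarrow> 'a" where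
  "lin_suminf I c = (THE L. lin_tendsto I (\<lambda>N. \<Sum>i<N. c i) L)"

definition restricted :: "(nat \<Rightarrow> 'a::comm_ring_1 set) \<Rightarrow> (nat \<Rightarrow> 'a) \<Rightarrow> bool" where
  "restricted I c \<longleftrightarrow> (\<forall>n. \<exists>N. \<forall>i\<ge>N. c i \<in> I n)"

text \<open>A restricted exponential homomorphism e : B \<rightarrow> B{T}, written as
  e b i = e_i(b).  Ring homomorphism into B{T} (with Cauchy product), continuous
  for the topology on B{T} given by the ideals of series with all coefficients in
  an open ideal, e_0 = id, and the identity
  sum_{i,j} e_j(e_i(b)) T'^j T^i = sum_l e_l(b) (T+T')^l in B{T,T'},
  written coefficientwise (coefficient of T^i T'^j).\<close>
definition restricted_exp_hom ::
    "(nat \<Rightarrow> 'a::comm_ring_1 set) \<Rightarrow> ('a \<Rightarrow> nat \<Rightarrow> 'a) \<Rightarrow> bool" where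
  "restricted_exp_hom I e \<longleftrightarrow>
     (\<forall>b. restricted I (e b))
     \<and> e 1 = (\<lambda>i. if i = 0 then 1 else 0)
     \<and> (\<forall>a b i. e (a + b) i = e a i + e b i)
     \<and> (\<forall>a b k. e (a * b) k = (\<Sum>i\<le>k. e a i * e b (k - i)))
     \<and> (\<forall>n. \<exists>m. \<forall>b\<in>I m. \<forall>i. e b i \<in> I n)
     \<and> (\<forall>b. e b 0 = b)
     \<and> (\<forall>b i j. e (e b i) j = of_nat ((i + j) choose i) * e b (i + j))"

definition exp_phi :: "(nat \<Rightarrow> 'a::comm_ring_1 set) \<Rightarrow> ('a \<Rightarrow> nat \<Rightarrow> 'a) \<Rightarrow> 'a \<Rightarrow> 'a" where
  "exp_phi I e b = lin_suminf I (\<lambda>i. e b i)"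

definition exp_psi :: "(nat \<Rightarrow> 'a::comm_ring_1 set) \<Rightarrow> ('a \<Rightarrow> nat \<Rightarrow> 'a) \<Rightarrow> 'a \<Rightarrow> 'a" where
  "exp_psi I e b = lin_suminf I (\<lambda>i. (- 1) ^ i * e b i)"

end

theory Submission
  imports Defs
begin


locale CL =
  fixes I :: "nat \<Rightarrow> 'a::comm_ring_1 set"
  assumes C: "complete_lin I"
begin

lemma LT: "lin_top I" using C by (simp add: complete_lin_def)

lemma idl: "is_ideal (I n)" using LT by (simp add: lin_top_def)

lemma i0[simp]: "0 \<in> I n" using idl[of n] by (simp add: is_ideal_def)
lemma iadd: "x \<in> I n \<Longrightarrow> y \<in> I n \<Longrightarrow> x + y \<in> I n" using idl[of n] by (simp add: is_ideal_def)
lemma ineg: "x \<in> I n \<Longrightarrow> - x \<in> I n" using idl[of n] by (simp add: is_ideal_def)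
lemma ineg_iff: "- x \<in> I n \<longleftrightarrow> x \<in> I n" using ineg[of x n] ineg[of "-x" n] by auto
lemma idiff: "x \<in> I n \<Longrightarrow> y \<in> I n \<Longrightarrow> x - y \<in> I n"
  using iadd[of x n "-y"] ineg[of y n] by simp
lemma imultl: "x \<in> I n \<Longrightarrow> r * x \<in> I n" using idl[of n] by (simp add: is_ideal_def)
lemma imultr: "x \<in> I n \<Longrightarrow> x * r \<in> I n" using imultl[of x n r] by (simp add: mult.commute)
lemma isum: "finite A \<Longrightarrow> (\<And>x. x \<in> A \<Longrightarrow> f x \<in> I n) \<Longrightarrow> sum f A \<in> I n"
  by (induction A rule: finite_induct) (auto intro: iadd)
lemma imono: "n \<le> m \<Longrightarrow> I m \<subseteq> I n"
proof (induction m rule: dec_induct)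
  case base then show ?case by simp
next
  case (step m) then show ?case using LT by (auto simp: lin_top_def)
qed
lemma hausdorff: "(\<And>n. x - y \<in> I n) \<Longrightarrow> x = y"
proof -
  assume "\<And>n. x - y \<in> I n"
  then have "x - y \<in> (\<Inter>n. I n)" by auto
  then have "x - y = 0" using C unfolding complete_lin_def by blast
  then show "x = y" by simp
qed
lemma icong_mult: "x - x' \<in> I n \<Longrightarrow> y - y' \<in> I n \<Longrightarrow> x * y - x' * y' \<in> I n"
proof -
  assume a: "x - x' \<in> I n" "y - y' \<in> I n"
  have "x * y - x' * y' = x * (y - y') + (x - x') * y'" by (simp add: algebra_simps)
  then show ?thesis using a by (simp add: iadd imultl imultr)
qed

definition ps :: "(nat \<Rightarrow> 'a) \<Rightarrow> nat \<Rightarrow> 'a" where "ps c N = (\<Sum>i<N. c i)"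

lemma tail_ps: "(\<And>i. i \<ge> a \<Longrightarrow> c i \<in> I n) \<Longrightarrow> ps c (a + d) - ps c a \<in> I n"
proof (induction d)
  case 0 then show ?case by (simp add: ps_def)
next
  case (Suc d)
  have "ps c (a + Suc d) - ps c a = (ps c (a + d) - ps c a) + c (a + d)"
    by (simp add: ps_def algebra_simps)
  moreover have "(ps c (a + d) - ps c a) + c (a + d) \<in> I n"
    using Suc by (intro iadd) auto
  ultimately show ?case by metis
qed

lemma tail_ps2: "(\<And>i. i \<ge> min a b \<Longrightarrow> c i \<in> I n) \<Longrightarrow> ps c a - ps c b \<in> I n"
proof (cases "a \<le> b")
  case True
  assume h: "(\<And>i. i \<ge> min a b \<Longrightarrow> c i \<in> I n)"
  obtain d where "b = a + d" using True le_Suc_ex by blast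
  then have "ps c b - ps c a \<in> I n" using tail_ps[of a c n d] h True by auto
  then show ?thesis using ineg by fastforce
next
  case False
  assume h: "(\<And>i. i \<ge> min a b \<Longrightarrow> c i \<in> I n)"
  obtain d where "a = b + d" using False le_Suc_ex[of b a] by auto
  then show ?thesis using tail_ps[of b c n d] h False by auto
qed

lemma conv: assumes "restricted I c" shows "\<exists>L. lin_tendsto I (ps c) L"
proof -
  define M where "M n = (SOME N. \<forall>i\<ge>N. c i \<in> I n)" for n
  have hM: "\<forall>i\<ge>M n. c i \<in> I n" for n
  proof -
    have "\<exists>N. \<forall>i\<ge>N. c i \<in> I n" using assms unfolding restricted_def by blast
    from someI_ex[OF this] show ?thesis by (simp add: M_def)
  qed
  define x where "x n = ps c (M n)" for n
  have "compatible_family I x"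
    unfolding compatible_family_def
  proof (intro allI impI)
    fix m n :: nat assume "n \<le> m"
    then have "\<forall>i\<ge>min (M m) (M n). c i \<in> I n" using hM imono by (auto simp: min_def) blast+
    then show "x m - x n \<in> I n" unfolding x_def by (intro tail_ps2) auto
  qed
  then obtain L where L: "\<And>n. L - x n \<in> I n" using C unfolding complete_lin_def by blast
  have "lin_tendsto I (ps c) L" unfolding lin_tendsto_def
  proof
    fix n
    have "\<forall>k\<ge>M n. ps c k - L \<in> I n"
    proof (intro allI impI)
      fix k assume "k \<ge> M n"
      then have "ps c k - ps c (M n) \<in> I n" using hM by (intro tail_ps2) auto
      moreover have "ps c k - L = (ps c k - ps c (M n)) - (L - x n)" by (simp add: x_def)
      ultimately show "ps c k - L \<in> I n" using L[of n] idiff by metis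
    qed
    then show "\<exists>N. \<forall>k\<ge>N. ps c k - L \<in> I n" by blast
  qed
  then show ?thesis by blast
qed

lemma lim_unique: "lin_tendsto I s L \<Longrightarrow> lin_tendsto I s L' \<Longrightarrow> L = L'"
proof (rule hausdorff)
  fix n assume a: "lin_tendsto I s L" "lin_tendsto I s L'"
  obtain N1 where "\<forall>k\<ge>N1. s k - L \<in> I n" using a(1) unfolding lin_tendsto_def by blast
  moreover obtain N2 where "\<forall>k\<ge>N2. s k - L' \<in> I n" using a(2) unfolding lin_tendsto_def by blast
  ultimately have "s (max N1 N2) - L' - (s (max N1 N2) - L) \<in> I n" by (intro idiff[of "s (max N1 N2) - L'"]) auto
  moreover have "s (max N1 N2) - L' - (s (max N1 N2) - L) = L - L'" by simp
  ultimately show "L - L' \<in> I n" by simp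
qed

lemma S_tend: "restricted I c \<Longrightarrow> lin_tendsto I (ps c) (lin_suminf I c)"
proof -
  assume "restricted I c"
  then obtain L where L: "lin_tendsto I (ps c) L" using conv by blast
  have "lin_suminf I c = L" unfolding lin_suminf_def
    using L lim_unique unfolding ps_def[abs_def] by blast
  then show ?thesis using L by simp
qed

lemma tailS: assumes "restricted I c" "\<And>i. i \<ge> N \<Longrightarrow> c i \<in> I n"
  shows "lin_suminf I c - ps c N \<in> I n"
proof -
  obtain N' where N': "\<forall>k\<ge>N'. ps c k - lin_suminf I c \<in> I n"
    using S_tend[OF assms(1)] unfolding lin_tendsto_def by blast
  have "ps c (max N N') - ps c N \<in> I n" using assms(2) by (intro tail_ps2) auto
  moreover have "lin_suminf I c - ps c N = (ps c (max N N') - ps c N) - (ps c (max N N') - lin_suminf I c)"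
    by simp
  moreover have "ps c (max N N') - lin_suminf I c \<in> I n" using N' by simp
  ultimately show ?thesis using idiff by metis
qed

end
context CL begin

lemma S_in: "restricted I c \<Longrightarrow> (\<And>i. c i \<in> I n) \<Longrightarrow> lin_suminf I c \<in> I n"
  using tailS[of c 0 n] by (simp add: ps_def)

lemma restr_add: "restricted I f \<Longrightarrow> restricted I g \<Longrightarrow> restricted I (\<lambda>i. f i + g i)"
  unfolding restricted_def
proof (intro allI)
  fix n assume a: "\<forall>n. \<exists>N. \<forall>i\<ge>N. f i \<in> I n" "\<forall>n. \<exists>N. \<forall>i\<ge>N. g i \<in> I n"
  obtain N1 N2 where "\<forall>i\<ge>N1. f i \<in> I n" "\<forall>i\<ge>N2. g i \<in> I n" using a by blast
  then have "\<forall>i\<ge>max N1 N2. f i + g i \<in> I n" by (auto intro: iadd)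
  then show "\<exists>N. \<forall>i\<ge>N. f i + g i \<in> I n" by blast
qed

lemma restr_mult: "restricted I f \<Longrightarrow> restricted I (\<lambda>i. r i * f i)"
  unfolding restricted_def by (meson imultl)

lemma S_add: assumes "restricted I f" "restricted I g"
  shows "lin_suminf I (\<lambda>i. f i + g i) = lin_suminf I f + lin_suminf I g"
proof (rule hausdorff)
  fix n
  obtain N1 N2 where h: "\<forall>i\<ge>N1. f i \<in> I n" "\<forall>i\<ge>N2. g i \<in> I n" using assms unfolding restricted_def by blast
  let ?N = "max N1 N2"
  have h1: "lin_suminf I f - ps f ?N \<in> I n" using h by (intro tailS assms) auto
  have h2: "lin_suminf I g - ps g ?N \<in> I n" using h by (intro tailS assms) auto
  have h3: "lin_suminf I (\<lambda>i. f i + g i) - ps (\<lambda>i. f i + g i) ?N \<in> I n"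
    using h by (intro tailS restr_add assms) (auto intro: iadd)
  have "ps (\<lambda>i. f i + g i) ?N = ps f ?N + ps g ?N" by (simp add: ps_def sum.distrib)
  have "(lin_suminf I (\<lambda>i. f i + g i) - ps (\<lambda>i. f i + g i) ?N)
     - (lin_suminf I f - ps f ?N) - (lin_suminf I g - ps g ?N) \<in> I n"
    by (rule idiff[OF idiff[OF h3 h1] h2])
  then show "lin_suminf I (\<lambda>i. f i + g i) - (lin_suminf I f + lin_suminf I g) \<in> I n"
    by (simp add: \<open>ps (\<lambda>i. f i + g i) ?N = ps f ?N + ps g ?N\<close> algebra_simps)
qed

lemma S_delta: "lin_suminf I (\<lambda>i. if i = 0 then 1 else 0) = 1"
proof (rule hausdorff)
  fix n
  have r: "restricted I (\<lambda>i. if i = 0 then (1::'a) else 0)" unfolding restricted_def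
    by (intro allI exI[of _ 1]) auto
  have "lin_suminf I (\<lambda>i. if i = 0 then (1::'a) else 0) - ps (\<lambda>i. if i = 0 then (1::'a) else 0) 1 \<in> I n"
    by (rule tailS[OF r]) auto
  then show "lin_suminf I (\<lambda>i. if i = 0 then (1::'a) else 0) - 1 \<in> I n" by (simp add: ps_def)
qed

lemma S_cauchy: assumes "restricted I f" "restricted I g"
  and hdef: "\<And>k. h k = (\<Sum>i\<le>k. f i * g (k - i))"
  shows "restricted I h \<and> lin_suminf I h = lin_suminf I f * lin_suminf I g"
proof -
  have key: "\<exists>N. (\<forall>i\<ge>N. f i \<in> I n) \<and> (\<forall>i\<ge>N. g i \<in> I n)" for n
  proof -
    obtain N1 N2 where h: "\<forall>i\<ge>N1. f i \<in> I n" "\<forall>i\<ge>N2. g i \<in> I n" using assms unfolding restricted_def by blast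
    then show ?thesis by (intro exI[of _ "max N1 N2"]) auto
  qed
  have hh: "\<forall>k\<ge>2*N. h k \<in> I n" if "\<forall>i\<ge>N. f i \<in> I n" "\<forall>i\<ge>N. g i \<in> I n" for N n
  proof (intro allI impI)
    fix k assume k: "k \<ge> 2 * N"
    show "h k \<in> I n" unfolding hdef
    proof (rule isum)
      fix i assume "i \<in> {..k}"
      show "f i * g (k - i) \<in> I n"
      proof (cases "i \<ge> N")
        case True then show ?thesis using that by (auto intro: imultr)
      next
        case False then have "k - i \<ge> N" using k by auto
        then show ?thesis using that by (auto intro: imultl)
      qed
    qed auto
  qed
  have rh: "restricted I h" unfolding restricted_def
  proof
    fix n obtain N where "(\<forall>i\<ge>N. f i \<in> I n) \<and> (\<forall>i\<ge>N. g i \<in> I n)" using key by blast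
    then show "\<exists>N. \<forall>i\<ge>N. h i \<in> I n" using hh by blast
  qed
  have "lin_suminf I h = lin_suminf I f * lin_suminf I g"
  proof (rule hausdorff)
    fix n obtain N where N: "\<forall>i\<ge>N. f i \<in> I n" "\<forall>i\<ge>N. g i \<in> I n" using key by blast
    have t1: "lin_suminf I h - ps h (2*N) \<in> I n" using hh[OF N] by (intro tailS rh) auto
    have t2: "lin_suminf I f * lin_suminf I g - ps f N * ps g N \<in> I n"
      using N by (intro icong_mult tailS assms) auto
    define Tri where "Tri = {(i,j). i + j < 2*N}"
    define Sq where "Sq = {..<N} \<times> {..<N}"
    have fT: "finite Tri"
      by (rule finite_subset[of _ "{..<2*N} \<times> {..<2*N}"]) (auto simp: Tri_def)
    have sub: "Sq \<subseteq> Tri" by (auto simp: Sq_def Tri_def)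
    have e1: "ps h (2*N) = (\<Sum>(i,j)\<in>Tri. f i * g j)"
      unfolding ps_def hdef Tri_def by (rule sum.triangle_reindex[symmetric])
    have e2: "ps f N * ps g N = (\<Sum>(i,j)\<in>Sq. f i * g j)"
      unfolding ps_def Sq_def sum_product sum.cartesian_product by simp
    have e3: "(\<Sum>(i,j)\<in>Tri. f i * g j) = (\<Sum>(i,j)\<in>Tri - Sq. f i * g j) + (\<Sum>(i,j)\<in>Sq. f i * g j)"
      by (rule sum.subset_diff[OF sub fT])
    have d: "(\<Sum>(i,j)\<in>Tri - Sq. f i * g j) \<in> I n"
    proof (rule isum)
      fix x assume "x \<in> Tri - Sq"
      moreover obtain i j where x: "x = (i,j)" by (cases x)
      ultimately have "i \<ge> N \<or> j \<ge> N" by (auto simp: Sq_def)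
      then show "(case x of (i,j) \<Rightarrow> f i * g j) \<in> I n" using N x by (auto intro: imultl imultr)
    qed (use fT in auto)
    have "lin_suminf I h - lin_suminf I f * lin_suminf I g =
      (lin_suminf I h - ps h (2*N)) + (\<Sum>(i,j)\<in>Tri - Sq. f i * g j) - (lin_suminf I f * lin_suminf I g - ps f N * ps g N)"
      using e1 e2 e3 by (simp add: algebra_simps)
    also have "\<dots> \<in> I n" by (rule idiff[OF iadd[OF t1 d] t2])
    finally show "lin_suminf I h - lin_suminf I f * lin_suminf I g \<in> I n" .
  qed
  with rh show ?thesis by blast
qed

end

locale EX = CL +
  fixes e :: "'a::comm_ring_1 \<Rightarrow> nat \<Rightarrow> 'a"
  assumes E: "restricted_exp_hom I e"
begin

lemma e_restr: "restricted I (e b)" using E by (simp add: restricted_exp_hom_def)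
lemma e_one: "e 1 = (\<lambda>i. if i = 0 then 1 else 0)" using E by (simp add: restricted_exp_hom_def)
lemma e_add: "e (a + b) i = e a i + e b i" using E by (simp add: restricted_exp_hom_def)
lemma e_mult: "e (a * b) k = (\<Sum>i\<le>k. e a i * e b (k - i))" using E by (simp add: restricted_exp_hom_def)
lemma e_cont: "\<exists>m. \<forall>b\<in>I m. \<forall>i. e b i \<in> I n" using E by (simp add: restricted_exp_hom_def)
lemma e_0: "e b 0 = b" using E by (simp add: restricted_exp_hom_def)
lemma e_e: "e (e b i) j = of_nat ((i + j) choose i) * e b (i + j)" using E by (simp add: restricted_exp_hom_def)

lemma e_zero: "e 0 i = 0"
  using e_add[of 0 0 i] by simp
lemma e_neg: "e (- a) i = - e a i"
  using e_add[of a "-a" i] e_zero[of i] by (simp add: eq_neg_iff_add_eq_0 add.commute)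
lemma e_diff: "e (a - b) i = e a i - e b i"
  using e_add[of a "-b" i] e_neg[of b i] by simp
lemma e_sum: "finite A \<Longrightarrow> e (\<Sum>x\<in>A. c x) j = (\<Sum>x\<in>A. e (c x) j)"
  by (induction A rule: finite_induct) (simp_all add: e_zero e_add)
lemma e_sign: "e ((-1)^i * x) j = (-1)^i * e x j"
  by (induction i) (simp_all add: e_neg)

definition "phi b = lin_suminf I (e b)"
definition "psi b = lin_suminf I (\<lambda>i. (-1)^i * e b i)"

lemma phi_hom: "ring_hom_on phi"
  unfolding ring_hom_on_def
proof (intro conjI allI)
  show "phi 1 = 1" unfolding phi_def e_one by (rule S_delta)
  fix a b
  show "phi (a + b) = phi a + phi b"
    unfolding phi_def e_add[abs_def] by (rule S_add[OF e_restr e_restr])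
  show "phi (a * b) = phi a * phi b"
    unfolding phi_def using S_cauchy[OF e_restr e_restr, of "e (a * b)" a b] e_mult by blast
qed

lemma psi_hom: "ring_hom_on psi"
  unfolding ring_hom_on_def
proof (intro conjI allI)
  have "(\<lambda>i. (-1)^i * e 1 i) = (\<lambda>i. if i = 0 then 1 else 0)" unfolding e_one by auto
  then show "psi 1 = 1" unfolding psi_def using S_delta by simp
  fix a b
  have "(\<lambda>i. (-1)^i * e (a + b) i) = (\<lambda>i. (-1)^i * e a i + (-1)^i * e b i)"
    by (simp add: e_add algebra_simps)
  then show "psi (a + b) = psi a + psi b"
    unfolding psi_def by (simp add: S_add[OF restr_mult[OF e_restr] restr_mult[OF e_restr]])
  have "(-1)^k * e (a * b) k = (\<Sum>i\<le>k. ((-1)^i * e a i) * ((-1)^(k - i) * e b (k - i)))" for k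
  proof -
    have "(-1)^k * e (a * b) k = (\<Sum>i\<le>k. (-1)^k * (e a i * e b (k - i)))"
      by (simp add: e_mult sum_distrib_left)
    also have "\<dots> = (\<Sum>i\<le>k. ((-1)^i * e a i) * ((-1)^(k - i) * e b (k - i)))"
    proof (rule sum.cong)
      fix i assume "i \<in> {..k}"
      then have "(-1::'a)^k = (-1)^i * (-1)^(k - i)" by (simp flip: power_add)
      then show "(-1)^k * (e a i * e b (k - i)) = ((-1)^i * e a i) * ((-1)^(k - i) * e b (k - i))"
        by (simp add: algebra_simps)
    qed simp
    finally show ?thesis .
  qed
  then show "psi (a * b) = psi a * psi b"
    unfolding psi_def using S_cauchy[OF restr_mult[OF e_restr] restr_mult[OF e_restr],
        of "\<lambda>k. (-1)^k * e (a * b) k" "\<lambda>i. (-1)^i" a "\<lambda>i. (-1)^i" b] by blast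
qed

lemma phi_cont: "cont_map I phi"
  unfolding cont_map_def
proof
  fix n obtain m where m: "\<forall>b\<in>I m. \<forall>i. e b i \<in> I n" using e_cont by blast
  have "\<forall>b\<in>I m. phi b \<in> I n" unfolding phi_def using m by (auto intro: S_in e_restr)
  then show "\<exists>m. \<forall>b\<in>I m. phi b \<in> I n" by blast
qed

lemma psi_cont: "cont_map I psi"
  unfolding cont_map_def
proof
  fix n obtain m where m: "\<forall>b\<in>I m. \<forall>i. e b i \<in> I n" using e_cont by blast
  have "\<forall>b\<in>I m. psi b \<in> I n" unfolding psi_def using m
    by (auto intro: S_in restr_mult e_restr imultl)
  then show "\<exists>m. \<forall>b\<in>I m. psi b \<in> I n" by blast
qed

lemma e_S: assumes "restricted I c" "\<forall>b\<in>I m. \<forall>i. e b i \<in> I n" "\<And>i. i \<ge> N \<Longrightarrow> c i \<in> I m"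
  shows "e (lin_suminf I c) j - (\<Sum>i<N. e (c i) j) \<in> I n"
proof -
  have "lin_suminf I c - ps c N \<in> I m" by (rule tailS[OF assms(1) assms(3)])
  then have "e (lin_suminf I c - ps c N) j \<in> I n" using assms(2) by blast
  then show ?thesis by (simp add: e_diff ps_def e_sum)
qed

lemma core: assumes "N \<ge> 1" "\<And>l. l \<ge> N \<Longrightarrow> e b l \<in> I n"
  shows "(\<Sum>i<N. \<Sum>j<N. (-1)^i * of_nat ((i + j) choose i) * e b (i + j)) - b \<in> I n"
proof -
  define F where "F i j = (-1)^i * of_nat ((i + j) choose i) * e b (i + j)" for i j
  define Tri where "Tri = {(i,j). i + j < N}"
  define Sq where "Sq = {..<N} \<times> {..<N}"
  have fS: "finite Sq" by (simp add: Sq_def)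
  have sub: "Tri \<subseteq> Sq" by (auto simp: Sq_def Tri_def)
  have e1: "(\<Sum>i<N. \<Sum>j<N. F i j) = (\<Sum>(i,j)\<in>Sq. F i j)"
    unfolding Sq_def sum.cartesian_product by simp
  have e2: "(\<Sum>(i,j)\<in>Sq. F i j) = (\<Sum>(i,j)\<in>Sq - Tri. F i j) + (\<Sum>(i,j)\<in>Tri. F i j)"
    by (rule sum.subset_diff[OF sub fS])
  have d: "(\<Sum>(i,j)\<in>Sq - Tri. F i j) \<in> I n"
  proof (rule isum)
    fix x assume "x \<in> Sq - Tri"
    moreover obtain i j where x: "x = (i,j)" by (cases x)
    ultimately have "i + j \<ge> N" by (auto simp: Tri_def)
    then show "(case x of (i,j) \<Rightarrow> F i j) \<in> I n" using assms(2) x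
      unfolding F_def by (auto intro: imultl)
  qed (use fS in auto)
  have "(\<Sum>(i,j)\<in>Tri. F i j) = (\<Sum>l<N. \<Sum>i\<le>l. F i (l - i))"
    unfolding Tri_def by (rule sum.triangle_reindex)
  also have "\<dots> = (\<Sum>l<N. (\<Sum>i\<le>l. (-1)^i * of_nat (l choose i)) * e b l)"
  proof (rule sum.cong[OF refl])
    fix l
    have "(\<Sum>i\<le>l. F i (l - i)) = (\<Sum>i\<le>l. (-1)^i * of_nat (l choose i) * e b l)"
      by (rule sum.cong) (auto simp: F_def)
    then show "(\<Sum>i\<le>l. F i (l - i)) = (\<Sum>i\<le>l. (-1)^i * of_nat (l choose i)) * e b l"
      by (simp add: sum_distrib_right)
  qed
  also have "\<dots> = (\<Sum>l<N. if l = 0 then e b l else 0)"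
    by (rule sum.cong[OF refl]) (simp add: choose_alternating_sum)
  also have "\<dots> = b" using assms(1) by (simp add: e_0)
  finally have "(\<Sum>(i,j)\<in>Tri. F i j) = b" .
  then have "(\<Sum>i<N. \<Sum>j<N. F i j) - b = (\<Sum>(i,j)\<in>Sq - Tri. F i j)" using e1 e2 by simp
  then show ?thesis using d by (simp add: F_def)
qed

lemma thresholds: "\<exists>m N. (\<forall>b\<in>I m. \<forall>i. e b i \<in> I n) \<and> N \<ge> 1 \<and>
   (\<forall>l\<ge>N. e b l \<in> I n) \<and> (\<forall>l\<ge>N. e b l \<in> I m)"
proof -
  obtain m where m: "\<forall>b\<in>I m. \<forall>i. e b i \<in> I n" using e_cont by blast
  obtain N0 where N0: "\<forall>l\<ge>N0. e b l \<in> I (max m n)" using e_restr unfolding restricted_def by blast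
  have "\<forall>l\<ge>Suc N0. e b l \<in> I n" "\<forall>l\<ge>Suc N0. e b l \<in> I m"
    using N0 imono[of n "max m n"] imono[of m "max m n"] by auto
  with m show ?thesis by (intro exI[of _ m] exI[of _ "Suc N0"]) auto
qed

lemma psi_phi: "psi (phi b) = b"
proof (rule hausdorff)
  fix n
  obtain m N where m: "\<forall>b\<in>I m. \<forall>i. e b i \<in> I n" and N: "N \<ge> 1" "\<forall>l\<ge>N. e b l \<in> I n" "\<forall>l\<ge>N. e b l \<in> I m"
    using thresholds by blast
  define A where "A j = (\<Sum>i<N. of_nat ((i + j) choose i) * e b (i + j))" for j
  have cl: "e (phi b) j - A j \<in> I n" for j
    using e_S[OF e_restr m, of N b j] N(3) unfolding A_def phi_def by (simp add: e_e)
  have Aj: "A j \<in> I n" if "j \<ge> N" for j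
    unfolding A_def using that N(2) by (auto intro!: isum imultl)
  have tl: "(-1)^j * e (phi b) j \<in> I n" if "j \<ge> N" for j
  proof -
    have "e (phi b) j = (e (phi b) j - A j) + A j" by simp
    then have "e (phi b) j \<in> I n" using iadd[OF cl Aj[OF that]] by metis
    then show ?thesis by (rule imultl)
  qed
  have t1: "psi (phi b) - ps (\<lambda>j. (-1)^j * e (phi b) j) N \<in> I n"
    unfolding psi_def by (rule tailS[OF restr_mult[OF e_restr] tl])
  have t2: "ps (\<lambda>j. (-1)^j * e (phi b) j) N - (\<Sum>j<N. (-1)^j * A j) \<in> I n"
  proof -
    have "ps (\<lambda>j. (-1)^j * e (phi b) j) N - (\<Sum>j<N. (-1)^j * A j) = (\<Sum>j<N. (-1)^j * (e (phi b) j - A j))"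
      by (simp add: ps_def sum_subtractf algebra_simps)
    also have "\<dots> \<in> I n" using cl by (auto intro: isum imultl)
    finally show ?thesis .
  qed
  have "(\<Sum>j<N. (-1)^j * A j) = (\<Sum>j<N. \<Sum>i<N. (-1)^j * of_nat ((j + i) choose j) * e b (j + i))"
    unfolding A_def sum_distrib_left
  proof (intro sum.cong refl)
    fix j i :: nat
    have "(i + j) choose i = (j + i) choose j" using binomial_symmetric[of i "i + j"] by (simp add: add.commute)
    then show "(-1)^j * (of_nat ((i + j) choose i) * e b (i + j)) = (-1)^j * of_nat ((j + i) choose j) * e b (j + i)"
      by (simp add: add.commute mult.assoc)
  qed
  then have t3: "(\<Sum>j<N. (-1)^j * A j) - b \<in> I n" using core[OF N(1), of b n] N(2) by simp
  have "psi (phi b) - b = (psi (phi b) - ps (\<lambda>j. (-1)^j * e (phi b) j) N)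
     + (ps (\<lambda>j. (-1)^j * e (phi b) j) N - (\<Sum>j<N. (-1)^j * A j)) + ((\<Sum>j<N. (-1)^j * A j) - b)"
    by simp
  also have "\<dots> \<in> I n" by (rule iadd[OF iadd[OF t1 t2] t3])
  finally show "psi (phi b) - b \<in> I n" .
qed

lemma phi_psi: "phi (psi b) = b"
proof (rule hausdorff)
  fix n
  obtain m N where m: "\<forall>b\<in>I m. \<forall>i. e b i \<in> I n" and N: "N \<ge> 1" "\<forall>l\<ge>N. e b l \<in> I n" "\<forall>l\<ge>N. e b l \<in> I m"
    using thresholds by blast
  define A where "A j = (\<Sum>i<N. (-1)^i * of_nat ((i + j) choose i) * e b (i + j))" for j
  have cl: "e (psi b) j - A j \<in> I n" for j
    using e_S[OF restr_mult[OF e_restr] m, of N "\<lambda>i. (-1)^i" b j] N(3) unfolding A_def psi_def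
    by (simp add: e_e e_sign imultl mult.assoc)
  have Aj: "A j \<in> I n" if "j \<ge> N" for j
    unfolding A_def using that N(2) by (auto intro!: isum imultl)
  have tl: "e (psi b) j \<in> I n" if "j \<ge> N" for j
  proof -
    have "e (psi b) j = (e (psi b) j - A j) + A j" by simp
    then show "e (psi b) j \<in> I n" using iadd[OF cl Aj[OF that]] by metis
  qed
  have t1: "phi (psi b) - ps (e (psi b)) N \<in> I n"
    unfolding phi_def by (rule tailS[OF e_restr tl])
  have t2: "ps (e (psi b)) N - (\<Sum>j<N. A j) \<in> I n"
  proof -
    have "ps (e (psi b)) N - (\<Sum>j<N. A j) = (\<Sum>j<N. (e (psi b) j - A j))"
      by (simp add: ps_def sum_subtractf)
    also have "\<dots> \<in> I n" using cl by (auto intro: isum)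
    finally show ?thesis .
  qed
  have "(\<Sum>j<N. A j) = (\<Sum>i<N. \<Sum>j<N. (-1)^i * of_nat ((i + j) choose i) * e b (i + j))"
    unfolding A_def by (rule sum.swap)
  then have t3: "(\<Sum>j<N. A j) - b \<in> I n" using core[OF N(1), of b n] N(2) by simp
  have "phi (psi b) - b = (phi (psi b) - ps (e (psi b)) N)
     + (ps (e (psi b)) N - (\<Sum>j<N. A j)) + ((\<Sum>j<N. A j) - b)"
    by simp
  also have "\<dots> \<in> I n" by (rule iadd[OF iadd[OF t1 t2] t3])
  finally show "phi (psi b) - b \<in> I n" .
qed

end

theorem proposition2p11:
  fixes I :: "nat \<Rightarrow> 'a::comm_ring_1 set" and e :: "'a \<Rightarrow> nat \<Rightarrow> 'a"
  assumes "complete_lin I"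
    and "restricted_exp_hom I e"
  shows "ring_hom_on (exp_phi I e) \<and> ring_hom_on (exp_psi I e)
       \<and> cont_map I (exp_phi I e) \<and> cont_map I (exp_psi I e)
       \<and> bij (exp_phi I e) \<and> bij (exp_psi I e)
       \<and> (\<forall>b. exp_psi I e (exp_phi I e b) = b)
       \<and> (\<forall>b. exp_phi I e (exp_psi I e b) = b)"
proof -
  interpret EX I e using assms by (unfold_locales) auto
  have p1: "exp_phi I e = phi" by (rule ext) (simp add: exp_phi_def phi_def)
  have p2: "exp_psi I e = psi" by (rule ext) (simp add: exp_psi_def psi_def)
  have c1: "psi \<circ> phi = id" by (rule ext) (simp add: psi_phi)
  have c2: "phi \<circ> psi = id" by (rule ext) (simp add: phi_psi)
  show ?thesis unfolding p1 p2
    using phi_hom psi_hom phi_cont psi_cont o_bij[OF c1 c2] o_bij[OF c2 c1] psi_phi phi_psi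
    by blast
qed

end
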